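(* Let $(\Omega,\mathcal{F},\mathbb{P})$ be an atomless probability space, $\mathrm{B}_b$ the space of bounded real-valued measurable functions on $\Omega$, and $H\colon\mathrm{B}_b\to\mathbb{R}$ a law-invariant premium principle, i.e. $H(X)=H(Y)$ whenever $X,Y\in\mathrm{B}_b$ have the same distribution function under $\mathbb{P}$. Then $R_{\mathrm{Max}}(X):=\inf\{H(X_0)\mid X_0\in\mathrm{B}_b,\ X_0\ge X\}$ is law-invariant.
   Context: A premium principle is a map $H\colon\mathrm{B}_b\to\mathbb{R}$ with $H(X+m)=H(X)+m$ for $m\in\mathbb{R}$, $H(0)=0$, and $H(X)\ge0$ for $X\ge0$, where $\le$ is the pointwise order. The distribution function of $X$ is $z\mapsto\mathbb{P}(X\le z)$. *)

theory Defs
  imports "HOL-Probability.Probability"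
begin

definition atomless :: "'a measure \<Rightarrow> bool" where
  "atomless M \<longleftrightarrow> (\<forall>A\<in>sets M. measure M A > 0 \<longrightarrow>
      (\<exists>B\<in>sets M. B \<subseteq> A \<and> 0 < measure M B \<and> measure M B < measure M A))"

definition Bb :: "'a measure \<Rightarrow> ('a \<Rightarrow> real) set" where
  "Bb M = {X. X \<in> borel_measurable M \<and> bounded (X ` space M)}"

definition distr_fun :: "'a measure \<Rightarrow> ('a \<Rightarrow> real) \<Rightarrow> real \<Rightarrow> real" where
  "distr_fun M X z = measure M {\<omega>\<in>space M. X \<omega> \<le> z}"

definition premium_principle :: "'a measure \<Rightarrow> (('a \<Rightarrow> real) \<Rightarrow> real) \<Rightarrow> bool" where
  "premium_principle M H \<longleftrightarrow>
     (\<forall>X\<in>Bb M. \<forall>m::real. H (\<lambda>\<omega>. X \<omega> + m) = H X + m) \<and>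
     H (\<lambda>_. 0) = 0 \<and>
     (\<forall>X\<in>Bb M. (\<forall>\<omega>\<in>space M. X \<omega> \<ge> 0) \<longrightarrow> H X \<ge> 0)"

definition law_invariant :: "'a measure \<Rightarrow> (('a \<Rightarrow> real) \<Rightarrow> real) \<Rightarrow> bool" where
  "law_invariant M H \<longleftrightarrow>
     (\<forall>X\<in>Bb M. \<forall>Y\<in>Bb M. distr_fun M X = distr_fun M Y \<longrightarrow> H X = H Y)"

definition R_Max :: "'a measure \<Rightarrow> (('a \<Rightarrow> real) \<Rightarrow> real) \<Rightarrow> ('a \<Rightarrow> real) \<Rightarrow> real" where
  "R_Max M H X = Inf {H X0 | X0. X0 \<in> Bb M \<and> (\<forall>\<omega>\<in>space M. X0 \<omega> \<ge> X \<omega>)}"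

end

theory Submission
  imports Defs
begin

definition qq :: "'a measure \<Rightarrow> ('a \<Rightarrow> real) \<Rightarrow> real \<Rightarrow> real" where
  "qq M Y t = Inf {y. distr_fun M Y y > t}"
definition SS :: "'a measure \<Rightarrow> ('a \<Rightarrow> real) \<Rightarrow> real \<Rightarrow> 'a set" where
  "SS M Y t = {w\<in>space M. Y w < qq M Y t}"
definition LL :: "'a measure \<Rightarrow> ('a \<Rightarrow> real) \<Rightarrow> real \<Rightarrow> 'a set" where
  "LL M Y t = {w\<in>space M. Y w \<le> qq M Y t}"

definition stepset :: "'a measure \<Rightarrow> ('a \<Rightarrow> real) \<Rightarrow> 'a set \<Rightarrow> 'a set \<Rightarrow> real \<Rightarrow> 'a set" where
  "stepset M Y Bs Br t = (SOME B. B \<in> sets M \<and> measure M B = t \<and> Bs \<subseteq> B \<and> B \<subseteq> Br \<and> SS M Y t \<subseteq> B \<and> B \<subseteq> LL M Y t)"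

primrec bb :: "'a measure \<Rightarrow> ('a \<Rightarrow> real) \<Rightarrow> nat \<Rightarrow> nat \<Rightarrow> 'a set" where
  "bb M Y 0 k = (if k = 0 then {} else space M)"
| "bb M Y (Suc n) j = (if even j then bb M Y n (j div 2)
     else stepset M Y (bb M Y n (j div 2)) (bb M Y n (j div 2 + 1)) (real j / 2 ^ Suc n))"

definition binv :: "'a measure \<Rightarrow> ('a \<Rightarrow> real) \<Rightarrow> nat \<Rightarrow> bool" where
  "binv M Y n \<longleftrightarrow> (\<forall>k\<le>2^n. bb M Y n k \<in> sets M \<and> measure M (bb M Y n k) = real k / 2^n) \<and>
     bb M Y n 0 = {} \<and> bb M Y n (2^n) = space M \<and> (\<forall>k<2^n. bb M Y n k \<subseteq> bb M Y n (Suc k)) \<and>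
     (\<forall>k. 0 < k \<longrightarrow> k < 2^n \<longrightarrow> SS M Y (real k / 2^n) \<subseteq> bb M Y n k \<and> bb M Y n k \<subseteq> LL M Y (real k / 2^n))"

lemma dy_below:
  fixes c :: real assumes "0 < c" "c \<le> 1"
  shows "\<exists>j::nat. j \<le> 2^m \<and> real j / 2^m < c \<and> c - 1/2^m \<le> real j / 2^m"
proof -
  define x where "x = c * 2^m"
  have x0: "0 < x" using assms by (simp add: x_def)
  have x1: "x \<le> 2^m" using assms by (simp add: x_def)
  define j where "j = nat (\<lceil>x\<rceil> - 1)"
  have cg: "1 \<le> \<lceil>x\<rceil>" using x0 by (simp add: one_le_ceiling)
  have rj: "real j = real_of_int \<lceil>x\<rceil> - 1" using cg by (simp add: j_def)
  have a: "real j < x" using rj ceiling_correct[of x] by linarith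
  have b: "x - 1 \<le> real j" using rj le_of_int_ceiling[of x] by linarith
  have "real j \<le> 2^m" using a x1 by linarith
  then have "j \<le> 2^m" by (metis of_nat_le_iff of_nat_numeral of_nat_power)
  moreover have "real j / 2^m < c" using a by (simp add: x_def field_simps)
  moreover have "c - 1/2^m = (x - 1) / 2^m" by (simp add: x_def field_simps)
  then have "c - 1/2^m \<le> real j / 2^m" using b by (simp add: divide_right_mono)
  ultimately show ?thesis by blast
qed

lemma dy_above:
  fixes c :: real assumes "0 \<le> c" "c < 1"
  shows "\<exists>j::nat. j \<le> 2^m \<and> c < real j / 2^m \<and> real j / 2^m \<le> c + 1/2^m"
proof -
  define x where "x = c * 2^m"
  have x0: "0 \<le> x" using assms by (simp add: x_def)
  have x1: "x < 2^m" using assms by (simp add: x_def)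
  define j where "j = nat \<lfloor>x\<rfloor> + 1"
  have rj: "real j = real_of_int \<lfloor>x\<rfloor> + 1" using x0 by (simp add: j_def)
  have a: "x < real j" using rj real_of_int_floor_add_one_gt[of x] by linarith
  have b: "real j \<le> x + 1" using rj of_int_floor_le[of x] by linarith
  have "\<lfloor>x\<rfloor> < 2^m" using x1 by (subst floor_less_iff) simp
  then have "\<lfloor>x\<rfloor> + 1 \<le> 2^m" by linarith
  then have "real_of_int (\<lfloor>x\<rfloor> + 1) \<le> real_of_int (2^m)" by (simp only: of_int_le_iff)
  then have "real j \<le> 2^m" using rj by simp
  then have "j \<le> 2^m" by (metis of_nat_le_iff of_nat_numeral of_nat_power)
  moreover have "c < real j / 2^m" using a by (simp add: x_def field_simps)
  moreover have "real j / 2^m \<le> c + 1/2^m" using b by (simp add: x_def field_simps)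
  ultimately show ?thesis by blast
qed

lemma le_by_pow:
  fixes c x :: real assumes "\<And>m::nat. c - 1/2^m \<le> x" shows "c \<le> x"
proof (rule ccontr)
  assume "\<not> c \<le> x"
  then obtain m where "(1/2::real)^m < c - x" using real_arch_pow_inv[of "c - x" "1/2"] by auto
  then show False using assms[of m] by (simp add: power_one_over)
qed

definition UU :: "'a measure \<Rightarrow> ('a \<Rightarrow> real) \<Rightarrow> 'a \<Rightarrow> real" where
  "UU M Y w = Inf {real k / 2^n | n k. k \<le> 2^n \<and> w \<in> bb M Y n k}"

lemma bb_lift: "bb M Y (n + d) (k * 2^d) = bb M Y n k"
proof (induction d)
  case 0 then show ?case by simp
next
  case (Suc d)
  have "k * 2 ^ Suc d = 2 * (k * 2^d)" by simp
  then show ?case using Suc by simp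
qed

context prob_space begin

lemma atomless_small:
  assumes al: "atomless M" and A: "A \<in> sets M" and pos: "measure M A > 0" and e: "e > 0"
  shows "\<exists>B\<in>sets M. B \<subseteq> A \<and> 0 < measure M B \<and> measure M B < e"
proof -
  have "\<exists>B\<in>sets M. B \<subseteq> A \<and> 0 < measure M B \<and> measure M B \<le> measure M A / 2^n" for n
  proof (induction n)
    case 0
    then show ?case using A pos by auto
  next
    case (Suc n)
    then obtain B where B: "B \<in> sets M" "B \<subseteq> A" "0 < measure M B" "measure M B \<le> measure M A / 2^n" by blast
    then obtain C where C: "C \<in> sets M" "C \<subseteq> B" "0 < measure M C" "measure M C < measure M B"
      using al unfolding atomless_def by blast
    have d: "measure M (B - C) = measure M B - measure M C"
      using B C by (simp add: finite_measure_Diff)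
    show ?case
    proof (cases "measure M C \<le> measure M B / 2")
      case True
      have "measure M C \<le> (measure M A / 2^n) / 2"
        using True B(4) by (meson divide_right_mono order_trans zero_le_numeral)
      then have "measure M C \<le> measure M A / 2^Suc n" by simp
      then show ?thesis using B C by blast
    next
      case False
      have "measure M (B - C) \<le> (measure M A / 2^n) / 2"
      proof -
        have "measure M (B - C) \<le> measure M B / 2" using False d by simp
        then show ?thesis using B(4) by (meson divide_right_mono order_trans zero_le_numeral)
      qed
      then have "measure M (B - C) \<le> measure M A / 2^Suc n" by simp
      moreover have "B - C \<in> sets M" "B - C \<subseteq> A" "0 < measure M (B - C)" using B C d by auto
      ultimately show ?thesis by blast
    qed
  qed
  moreover obtain n where "measure M A / 2^n < e"
  proof -
    obtain n where "(1/2::real)^n < e / measure M A"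
      using real_arch_pow_inv[of "e / measure M A" "1/2"] pos e by auto
    then have "measure M A * (1/2)^n < e" using pos by (simp add: field_simps)
    then show ?thesis using that by (simp add: power_divide)
  qed
  ultimately show ?thesis by (meson le_less_trans)
qed

lemma sierpinski:
  assumes al: "atomless M" and A: "A \<in> sets M" and t: "0 \<le> t" "t \<le> measure M A"
  shows "\<exists>B\<in>sets M. B \<subseteq> A \<and> measure M B = t"
proof -
  define cand where "cand C = {D. D \<in> sets M \<and> D \<subseteq> A - C \<and> measure M C + measure M D \<le> t}" for C
  define sp where "sp C = Sup (measure M ` cand C)" for C
  define g where "g C = (SOME D. D \<in> cand C \<and> sp C \<le> 2 * measure M D)" for C
  have bdd: "bdd_above (measure M ` cand C)" for C
    by (rule bdd_aboveI[of _ 1]) auto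
  have g: "g C \<in> cand C \<and> sp C \<le> 2 * measure M (g C)" if "C \<in> sets M" "measure M C \<le> t" for C
  proof -
    have ne: "{} \<in> cand C" using that by (auto simp: cand_def)
    have "\<exists>D. D \<in> cand C \<and> sp C \<le> 2 * measure M D"
    proof (cases "sp C \<le> 0")
      case True then show ?thesis using ne by (intro exI[of _ "{}"]) auto
    next
      case False
      then have "sp C / 2 < Sup (measure M ` cand C)" by (simp add: sp_def)
      then obtain D where "D \<in> cand C" "sp C / 2 < measure M D"
      proof -
        have "measure M ` cand C \<noteq> {}" using ne by blast
        then have "\<exists>x\<in>measure M ` cand C. sp C / 2 < x"
          using less_cSup_iff[OF _ bdd[of C], of "sp C / 2"] \<open>sp C / 2 < _\<close> by simp
        then show ?thesis using that by blast
      qed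
      then show ?thesis by (intro exI[of _ D]) auto
    qed
    then show ?thesis unfolding g_def by (rule someI_ex)
  qed
  define C where "C n = ((\<lambda>X. X \<union> g X) ^^ n) {}" for n
  have Csuc: "C (Suc n) = C n \<union> g (C n)" for n by (simp add: C_def)
  have C0: "C 0 = {}" by (simp add: C_def)
  have inv: "C n \<in> sets M \<and> C n \<subseteq> A \<and> measure M (C n) \<le> t \<and>
      measure M (C (Suc n)) = measure M (C n) + measure M (g (C n))" for n
  proof (induction n)
    case 0
    have "g {} \<in> cand {}" using g[of "{}"] t by auto
    then show ?case using t A by (auto simp: C0 Csuc cand_def)
  next
    case (Suc n)
    have gC: "g (C n) \<in> cand (C n)" using g[of "C n"] Suc by auto
    have m1: "measure M (C (Suc n)) = measure M (C n) + measure M (g (C n))"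
      using Suc by blast
    have s1: "C (Suc n) \<in> sets M" "C (Suc n) \<subseteq> A" "measure M (C (Suc n)) \<le> t"
      using Suc gC m1 by (auto simp: Csuc cand_def)
    have gC': "g (C (Suc n)) \<in> cand (C (Suc n))" using g[of "C (Suc n)"] s1 by auto
    have "measure M (C (Suc n) \<union> g (C (Suc n))) = measure M (C (Suc n)) + measure M (g (C (Suc n)))"
      using gC' s1 by (intro finite_measure_Union) (auto simp: cand_def)
    then show ?case using s1 by (simp add: Csuc[of "Suc n"])
  qed
  have inc: "incseq C" by (rule incseq_SucI) (simp add: Csuc)
  define B where "B = (\<Union>n. C n)"
  have Bs: "B \<in> sets M" "B \<subseteq> A" using inv by (auto simp: B_def)
  have lim: "(\<lambda>n. measure M (C n)) \<longlonglongrightarrow> measure M B"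
    unfolding B_def using inv inc by (intro finite_Lim_measure_incseq) auto
  have Ble: "measure M B \<le> t" by (rule LIMSEQ_le_const2[OF lim]) (use inv in auto)
  have Cle: "measure M (C n) \<le> measure M B" for n
    using Bs inv by (intro finite_measure_mono) (auto simp: B_def)
  show ?thesis
  proof (cases "measure M B = t")
    case True then show ?thesis using Bs by blast
  next
    case False
    then have lt: "measure M B < t" using Ble by simp
    have "measure M (A - B) = measure M A - measure M B" using A Bs by (simp add: finite_measure_Diff)
    then have "measure M (A - B) > 0" using lt t by simp
    then obtain D where D: "D \<in> sets M" "D \<subseteq> A - B" "0 < measure M D" "measure M D < t - measure M B"
      using atomless_small[OF al, of "A - B" "t - measure M B"] A Bs lt by auto
    have Dle: "measure M D \<le> 2 * measure M (g (C n))" for n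
    proof -
      have "D \<in> cand (C n)" using D Cle[of n] by (auto simp: cand_def B_def)
      then have "measure M D \<le> sp (C n)" unfolding sp_def by (intro cSup_upper bdd) auto
      also have "\<dots> \<le> 2 * measure M (g (C n))" using g[of "C n"] inv by auto
      finally show ?thesis .
    qed
    have grow: "real n * (measure M D / 2) \<le> measure M (C n)" for n
    proof (induction n)
      case 0 then show ?case by (simp add: C0)
    next
      case (Suc n)
      then show ?case using inv[of n] Dle[of n] by (simp add: algebra_simps)
    qed
    obtain n where "1 < real n * (measure M D / 2)"
      using reals_Archimedean3[of "measure M D / 2"] D by (meson half_gt_zero)
    then have "1 < measure M (C n)" using grow[of n] by linarith
    then show ?thesis using prob_le_1 by (simp add: not_le[symmetric])
  qed
qed

lemma ex_suc_small: "0 < (x::real) \<Longrightarrow> \<exists>n. 1 / real (Suc n) < x"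
  using reals_Archimedean[of x] by (simp add: inverse_eq_divide)

lemma df_right:
  assumes Y: "Y \<in> borel_measurable M" and h: "\<And>n. u \<le> distr_fun M Y (z + 1 / Suc n)"
  shows "u \<le> distr_fun M Y z"
proof -
  define A where "A n = {w\<in>space M. Y w \<le> z + 1 / Suc n}" for n :: nat
  have dec: "decseq A"
  proof (rule decseq_SucI)
    fix n
    have "1 / real (Suc (Suc n)) \<le> 1 / real (Suc n)" by (simp add: frac_le)
    then show "A (Suc n) \<subseteq> A n" by (auto simp: A_def)
  qed
  have eq: "(\<Inter>n. A n) = {w\<in>space M. Y w \<le> z}"
  proof (safe)
    fix w assume w: "w \<in> (\<Inter>n. A n)"
    then show "w \<in> space M" by (auto simp: A_def)
    show "Y w \<le> z"
    proof (rule ccontr)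
      assume "\<not> Y w \<le> z"
      then obtain n where "1 / real (Suc n) < Y w - z"
        using ex_suc_small[of "Y w - z"] by auto
      moreover have "Y w \<le> z + 1 / Suc n" using w by (auto simp: A_def)
      ultimately show False by simp
    qed
  next
    fix w n assume "w \<in> space M" "Y w \<le> z"
    moreover have "0 \<le> 1 / real (Suc n)" by simp
    ultimately have "Y w \<le> z + 1 / real (Suc n)" by linarith
    then show "w \<in> A n" using \<open>w \<in> space M\<close> unfolding A_def by blast
  qed
  have "(\<lambda>n. measure M (A n)) \<longlonglongrightarrow> measure M (\<Inter>n. A n)"
  proof (rule finite_Lim_measure_decseq[OF _ dec])
    show "range A \<subseteq> sets M" using Y by (auto simp: A_def)
  qed
  then have "(\<lambda>n. measure M (A n)) \<longlonglongrightarrow> distr_fun M Y z" by (simp add: eq distr_fun_def)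
  then show ?thesis
    by (rule LIMSEQ_le_const) (use h in \<open>auto simp: A_def distr_fun_def\<close>)
qed

lemma df_left:
  assumes Y: "Y \<in> borel_measurable M" and h: "\<And>n. distr_fun M Y (z - 1 / Suc n) \<le> u"
  shows "measure M {w\<in>space M. Y w < z} \<le> u"
proof -
  define A where "A n = {w\<in>space M. Y w \<le> z - 1 / Suc n}" for n :: nat
  have inc: "incseq A"
  proof (rule incseq_SucI)
    fix n
    have "1 / real (Suc (Suc n)) \<le> 1 / real (Suc n)" by (simp add: frac_le)
    then show "A n \<subseteq> A (Suc n)" by (auto simp: A_def)
  qed
  have eq: "(\<Union>n. A n) = {w\<in>space M. Y w < z}"
  proof (safe)
    fix w n assume w: "w \<in> A n"
    then show "w \<in> space M" by (auto simp: A_def)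
    have "0 < 1 / real (Suc n)" by simp
    moreover have "Y w \<le> z - 1 / real (Suc n)" using w by (simp add: A_def)
    ultimately show "Y w < z" by linarith
  next
    fix w assume "w \<in> space M" "Y w < z"
    then obtain n where "1 / real (Suc n) < z - Y w"
      using ex_suc_small[of "z - Y w"] by auto
    then show "w \<in> (\<Union>n. A n)" using \<open>w \<in> space M\<close> by (auto simp: A_def intro!: exI[of _ n])
  qed
  have "(\<lambda>n. measure M (A n)) \<longlonglongrightarrow> measure M (\<Union>n. A n)"
  proof (rule finite_Lim_measure_incseq[OF _ inc])
    show "range A \<subseteq> sets M" using Y by (auto simp: A_def)
  qed
  then have "(\<lambda>n. measure M (A n)) \<longlonglongrightarrow> measure M {w\<in>space M. Y w < z}" by (simp add: eq)
  then show ?thesis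
    by (rule LIMSEQ_le_const2) (use h in \<open>auto simp: A_def distr_fun_def\<close>)
qed

lemma df_mono:
  assumes Y: "Y \<in> borel_measurable M" and "y \<le> y'"
  shows "distr_fun M Y y \<le> distr_fun M Y y'"
  unfolding distr_fun_def using assms by (intro finite_measure_mono) auto

context
  fixes Y assumes YB: "Y \<in> Bb M"
begin

lemma Ymeas: "Y \<in> borel_measurable M" using YB by (simp add: Bb_def)

lemma Ybnd: obtains c where "\<And>w. w \<in> space M \<Longrightarrow> \<bar>Y w\<bar> \<le> c"
  using YB unfolding Bb_def bounded_iff by auto

lemma F_top: assumes "\<And>w. w \<in> space M \<Longrightarrow> \<bar>Y w\<bar> \<le> c" "c \<le> y"
  shows "distr_fun M Y y = 1"
proof -
  have "{w\<in>space M. Y w \<le> y} = space M" using assms by force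
  then show ?thesis by (simp add: distr_fun_def prob_space)
qed

lemma F_bot: assumes "\<And>w. w \<in> space M \<Longrightarrow> \<bar>Y w\<bar> \<le> c" "y < - c"
  shows "distr_fun M Y y = 0"
proof -
  have e: "{w\<in>space M. Y w \<le> y} = {}" using assms by force
  show ?thesis unfolding distr_fun_def by (subst e) simp
qed

lemma F_le1: "distr_fun M Y y \<le> 1" by (simp add: distr_fun_def)

lemma qset: assumes "0 \<le> t" "t < 1"
  shows "{y. distr_fun M Y y > t} \<noteq> {}" "bdd_below {y. distr_fun M Y y > t}"
proof -
  obtain c where c: "\<And>w. w \<in> space M \<Longrightarrow> \<bar>Y w\<bar> \<le> c" using Ybnd by blast
  have "c \<in> {y. distr_fun M Y y > t}" using F_top[OF c order_refl] assms by simp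
  then show "{y. distr_fun M Y y > t} \<noteq> {}" by blast
  show "bdd_below {y. distr_fun M Y y > t}"
  proof (rule bdd_belowI[of _ "- c"])
    fix y assume "y \<in> {y. distr_fun M Y y > t}"
    then show "- c \<le> y" using F_bot[OF c, of y] assms by force
  qed
qed

lemma qq_le: assumes "0 \<le> t" "t < distr_fun M Y y" shows "qq M Y t \<le> y"
proof -
  obtain c where c: "\<And>w. w \<in> space M \<Longrightarrow> \<bar>Y w\<bar> \<le> c" using Ybnd by blast
  have "bdd_below {y. distr_fun M Y y > t}"
  proof (rule bdd_belowI[of _ "- c"])
    fix y assume "y \<in> {y. distr_fun M Y y > t}"
    then show "- c \<le> y" using F_bot[OF c, of y] assms by force
  qed
  then show ?thesis unfolding qq_def using assms by (intro cInf_lower) auto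
qed

lemma qq_mono: assumes "0 \<le> s" "s \<le> t" "t < 1" shows "qq M Y s \<le> qq M Y t"
  unfolding qq_def
proof (rule cInf_superset_mono)
  show "{y. t < distr_fun M Y y} \<noteq> {}" using qset assms by auto
  show "bdd_below {y. s < distr_fun M Y y}" using qset assms by auto
  show "{y. t < distr_fun M Y y} \<subseteq> {y. s < distr_fun M Y y}" using assms by auto
qed

lemma SS_sets: "SS M Y t \<in> sets M" unfolding SS_def using Ymeas by measurable
lemma LL_sets: "LL M Y t \<in> sets M" unfolding LL_def using Ymeas by measurable

lemma SS_le: assumes "0 \<le> t" "t < 1" shows "measure M (SS M Y t) \<le> t"
  unfolding SS_def
proof (rule df_left[OF Ymeas])
  fix n
  show "distr_fun M Y (qq M Y t - 1 / real (Suc n)) \<le> t"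
  proof (rule ccontr)
    assume "\<not> ?thesis"
    then have "qq M Y t \<le> qq M Y t - 1 / real (Suc n)" using assms by (intro qq_le) auto
    moreover have "0 < 1 / real (Suc n)" by simp
    ultimately show False by linarith
  qed
qed

lemma LL_ge: assumes "0 \<le> t" "t < 1" shows "t \<le> measure M (LL M Y t)"
  unfolding LL_def
  apply (rule df_right[OF Ymeas, unfolded distr_fun_def])
  unfolding distr_fun_def[symmetric]
proof -
  fix n
  have "Inf {y. distr_fun M Y y > t} < qq M Y t + 1 / real (Suc n)" by (simp add: qq_def)
  then obtain y where y: "t < distr_fun M Y y" "y < qq M Y t + 1 / real (Suc n)"
    using cInf_less_iff[OF qset[OF assms]] by blast
  then show "t \<le> distr_fun M Y (qq M Y t + 1 / real (Suc n))"
    using df_mono[OF Ymeas, of y "qq M Y t + 1 / real (Suc n)"] by linarith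
qed

lemma step_exists:
  assumes al: "atomless M"
    and Bs: "Bs \<in> sets M" "measure M Bs = s" and Br: "Br \<in> sets M" "measure M Br = r"
    and st: "0 \<le> s" "s < t" "t < r" "r \<le> 1" and sub: "Bs \<subseteq> Br"
    and s0: "s = 0 \<Longrightarrow> Bs = {}"
    and sp: "0 < s \<Longrightarrow> SS M Y s \<subseteq> Bs \<and> Bs \<subseteq> LL M Y s"
    and r1: "r = 1 \<Longrightarrow> Br = space M"
    and rl: "r < 1 \<Longrightarrow> SS M Y r \<subseteq> Br \<and> Br \<subseteq> LL M Y r"
  shows "\<exists>B. B \<in> sets M \<and> measure M B = t \<and> Bs \<subseteq> B \<and> B \<subseteq> Br \<and> SS M Y t \<subseteq> B \<and> B \<subseteq> LL M Y t"
proof -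
  define Lo where "Lo = Bs \<union> SS M Y t"
  define Up where "Up = Br \<inter> LL M Y t"
  have t01: "0 \<le> t" "t < 1" using st by auto
  have SL: "SS M Y u \<subseteq> LL M Y u" for u by (auto simp: SS_def LL_def)
  have Lo_s: "Lo \<in> sets M" using Bs SS_sets by (simp add: Lo_def)
  have Up_s: "Up \<in> sets M" using Br LL_sets by (simp add: Up_def)
  have Lo_le: "measure M Lo \<le> t"
  proof (cases "s = 0")
    case True
    then show ?thesis using s0 SS_le[OF t01] by (simp add: Lo_def)
  next
    case False
    then have sp': "SS M Y s \<subseteq> Bs" "Bs \<subseteq> LL M Y s" using sp st by auto
    have qm: "qq M Y s \<le> qq M Y t" using qq_mono st by auto
    show ?thesis
    proof (cases "qq M Y s < qq M Y t")
      case True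
      then have "Bs \<subseteq> SS M Y t" using sp' by (auto simp: SS_def LL_def)
      then have "Lo = SS M Y t" by (auto simp: Lo_def)
      then show ?thesis using SS_le[OF t01] by simp
    next
      case False
      then have "qq M Y s = qq M Y t" using qm by simp
      then have "SS M Y t = SS M Y s" by (simp add: SS_def)
      then have "Lo = Bs" using sp' by (auto simp: Lo_def)
      then show ?thesis using Bs st by simp
    qed
  qed
  have Up_ge: "t \<le> measure M Up"
  proof (cases "r = 1")
    case True
    then have "Up = LL M Y t" using r1 by (auto simp: Up_def LL_def)
    then show ?thesis using LL_ge[OF t01] by simp
  next
    case False
    then have rl': "SS M Y r \<subseteq> Br" "Br \<subseteq> LL M Y r" using rl st by auto
    have qm: "qq M Y t \<le> qq M Y r" using qq_mono st False by auto
    show ?thesis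
    proof (cases "qq M Y t < qq M Y r")
      case True
      then have "LL M Y t \<subseteq> Br" using rl' by (auto simp: SS_def LL_def)
      then have "Up = LL M Y t" by (auto simp: Up_def)
      then show ?thesis using LL_ge[OF t01] by simp
    next
      case False
      then have "qq M Y t = qq M Y r" using qm by simp
      then have "LL M Y t = LL M Y r" by (simp add: LL_def)
      then have "Up = Br" using rl' by (auto simp: Up_def)
      then show ?thesis using Br st by simp
    qed
  qed
  have LoUp: "Lo \<subseteq> Up"
  proof -
    have "Bs \<subseteq> LL M Y t"
    proof (cases "s = 0")
      case True then show ?thesis using s0 by simp
    next
      case False
      then have "Bs \<subseteq> LL M Y s" using sp st by auto
      moreover have "qq M Y s \<le> qq M Y t" using qq_mono st by auto
      ultimately show ?thesis by (auto simp: LL_def)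
    qed
    moreover have "SS M Y t \<subseteq> Br"
    proof (cases "r = 1")
      case True then show ?thesis using r1 by (auto simp: SS_def)
    next
      case False
      then have "SS M Y r \<subseteq> Br" using rl st by auto
      moreover have "qq M Y t \<le> qq M Y r" using qq_mono st False by auto
      ultimately show ?thesis by (auto simp: SS_def)
    qed
    ultimately show ?thesis using sub SL[of t] by (auto simp: Lo_def Up_def)
  qed
  have mdiff: "measure M (Up - Lo) = measure M Up - measure M Lo"
    using Lo_s Up_s LoUp by (simp add: finite_measure_Diff)
  obtain D where D: "D \<in> sets M" "D \<subseteq> Up - Lo" "measure M D = t - measure M Lo"
    using sierpinski[OF al, of "Up - Lo" "t - measure M Lo"] Lo_s Up_s Lo_le Up_ge mdiff by auto
  define B where "B = Lo \<union> D"
  have "measure M B = measure M Lo + measure M D"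
    unfolding B_def using D Lo_s by (intro finite_measure_Union) auto
  then have "measure M B = t" using D by simp
  moreover have "B \<in> sets M" using D Lo_s by (simp add: B_def)
  moreover have "Lo \<subseteq> B" "B \<subseteq> Up" using D LoUp by (auto simp: B_def)
  ultimately show ?thesis by (intro exI[of _ B]) (auto simp: Lo_def Up_def)
qed

lemma binv_all: assumes al: "atomless M" shows "binv M Y n"
proof (induction n)
  case 0
  show ?case by (auto simp: binv_def le_Suc_eq prob_space)
next
  case (Suc n)
  note IH = Suc[unfolded binv_def]
  have odd_prop: "stepset M Y (bb M Y n k) (bb M Y n (Suc k)) (real (2*k+1) / 2^Suc n) \<in> sets M \<and>
      measure M (stepset M Y (bb M Y n k) (bb M Y n (Suc k)) (real (2*k+1) / 2^Suc n)) = real (2*k+1) / 2^Suc n \<and>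
      bb M Y n k \<subseteq> stepset M Y (bb M Y n k) (bb M Y n (Suc k)) (real (2*k+1) / 2^Suc n) \<and>
      stepset M Y (bb M Y n k) (bb M Y n (Suc k)) (real (2*k+1) / 2^Suc n) \<subseteq> bb M Y n (Suc k) \<and>
      SS M Y (real (2*k+1) / 2^Suc n) \<subseteq> stepset M Y (bb M Y n k) (bb M Y n (Suc k)) (real (2*k+1) / 2^Suc n) \<and>
      stepset M Y (bb M Y n k) (bb M Y n (Suc k)) (real (2*k+1) / 2^Suc n) \<subseteq> LL M Y (real (2*k+1) / 2^Suc n)"
    if k: "k < 2^n" for k
  proof -
    have p2: "(0::real) < 2^n" by simp
    have kk: "real k + 1 \<le> 2^n" using k by (metis Suc_leI of_nat_Suc of_nat_le_iff of_nat_numeral of_nat_power add.commute)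
    have "\<exists>B. B \<in> sets M \<and> measure M B = real (2*k+1) / 2^Suc n \<and> bb M Y n k \<subseteq> B \<and> B \<subseteq> bb M Y n (Suc k) \<and>
        SS M Y (real (2*k+1) / 2^Suc n) \<subseteq> B \<and> B \<subseteq> LL M Y (real (2*k+1) / 2^Suc n)"
    proof (rule step_exists[OF al, where s = "real k / 2^n" and r = "real (Suc k) / 2^n"])
      show "bb M Y n k \<in> sets M" "measure M (bb M Y n k) = real k / 2^n" using IH k by auto
      show "bb M Y n (Suc k) \<in> sets M" "measure M (bb M Y n (Suc k)) = real (Suc k) / 2^n" using IH k by auto
      show "0 \<le> real k / 2^n" by simp
      show "real k / 2^n < real (2*k+1) / 2^Suc n" using p2 by (simp add: field_simps)
      show "real (2*k+1) / 2^Suc n < real (Suc k) / 2^n" using p2 by (simp add: field_simps)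
      show "real (Suc k) / 2^n \<le> 1" using kk p2 by (simp add: field_simps)
      show "bb M Y n k \<subseteq> bb M Y n (Suc k)" using IH k by auto
      show "bb M Y n k = {}" if "real k / 2^n = 0" using that IH by simp
      show "SS M Y (real k / 2^n) \<subseteq> bb M Y n k \<and> bb M Y n k \<subseteq> LL M Y (real k / 2^n)"
        if "0 < real k / 2^n"
      proof -
        have "0 < k" using that by (cases "k = 0") auto
        then show ?thesis using IH k by blast
      qed
      show "bb M Y n (Suc k) = space M" if "real (Suc k) / 2^n = 1"
      proof -
        have "real (Suc k) = 2^n" using that by (simp add: field_simps)
        then have "Suc k = 2^n" by (metis of_nat_eq_iff of_nat_numeral of_nat_power)
        then show ?thesis using IH by simp
      qed
      show "SS M Y (real (Suc k) / 2^n) \<subseteq> bb M Y n (Suc k) \<and> bb M Y n (Suc k) \<subseteq> LL M Y (real (Suc k) / 2^n)"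
        if "real (Suc k) / 2^n < 1"
      proof -
        have "real (Suc k) < 2^n" using that by (simp add: field_simps)
        then have "Suc k < 2^n" by (metis of_nat_less_iff of_nat_numeral of_nat_power)
        moreover have "0 < Suc k" by simp
        ultimately show ?thesis using IH by blast
      qed
    qed
    then show ?thesis unfolding stepset_def by (rule someI_ex)
  qed
  have ev: "bb M Y (Suc n) (2*k) = bb M Y n k" for k by simp
  have od: "bb M Y (Suc n) (2*k+1) = stepset M Y (bb M Y n k) (bb M Y n (Suc k)) (real (2*k+1) / 2^Suc n)" for k
    by simp
  have dv: "real (2*k) / 2^Suc n = real k / 2^n" for k by simp
  have h1: "bb M Y (Suc n) j \<in> sets M \<and> measure M (bb M Y (Suc n) j) = real j / 2 ^ Suc n"
    if j: "j \<le> 2^Suc n" for j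
    proof (cases "even j")
      case True
      then obtain k where "j = 2*k" by blast
      then show ?thesis using IH j by (simp only: ev dv) auto
    next
      case False
      then obtain k where jk: "j = 2*k+1" using oddE by blast
      then have "k < 2^n" using j by simp
      then show ?thesis unfolding jk od using odd_prop by blast
    qed
  have h2: "bb M Y (Suc n) 0 = {}" using IH by simp
  have h3: "bb M Y (Suc n) (2^Suc n) = space M" using IH by simp
  have h4: "bb M Y (Suc n) j \<subseteq> bb M Y (Suc n) (Suc j)" if j: "j < 2^Suc n" for j
    proof (cases "even j")
      case True
      then obtain k where jk: "j = 2*k" by blast
      then have "k < 2^n" using j by simp
      have e1: "bb M Y (Suc n) j = bb M Y n k" using jk ev by simp
      have e2: "bb M Y (Suc n) (Suc j) = stepset M Y (bb M Y n k) (bb M Y n (Suc k)) (real (2*k+1) / 2^Suc n)"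
        using jk od[of k] by simp
      show ?thesis unfolding e1 e2 using odd_prop[OF \<open>k < 2^n\<close>] by blast
    next
      case False
      then obtain k where jk: "j = 2*k+1" using oddE by blast
      then have "k < 2^n" using j by simp
      moreover have "Suc j = 2 * Suc k" using jk by simp
      ultimately have e2: "bb M Y (Suc n) (Suc j) = bb M Y n (Suc k)" using ev[of "Suc k"] by simp
      have e1: "bb M Y (Suc n) j = stepset M Y (bb M Y n k) (bb M Y n (Suc k)) (real (2*k+1) / 2^Suc n)"
        using jk od[of k] by simp
      show ?thesis unfolding e1 e2 using odd_prop[OF \<open>k < 2^n\<close>] by blast
    qed
  have h5: "SS M Y (real j / 2^Suc n) \<subseteq> bb M Y (Suc n) j \<and> bb M Y (Suc n) j \<subseteq> LL M Y (real j / 2^Suc n)"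
    if j: "0 < j" "j < 2^Suc n" for j
    proof (cases "even j")
      case True
      then obtain k where jk: "j = 2*k" by blast
      then have "0 < k" "k < 2^n" using j by auto
      then show ?thesis unfolding jk ev dv using IH by blast
    next
      case False
      then obtain k where jk: "j = 2*k+1" using oddE by blast
      then have "k < 2^n" using j by simp
      then show ?thesis unfolding jk od using odd_prop by blast
    qed
  show ?case unfolding binv_def using h1 h2 h3 h4 h5 by blast
qed

end

context
  fixes Y assumes YB: "Y \<in> Bb M" and al: "atomless M"
begin

lemma binv: "binv M Y n" using binv_all[OF YB al] .

lemma bb_mono: assumes "k \<le> j" "j \<le> 2^n" shows "bb M Y n k \<subseteq> bb M Y n j"
  using assms
proof (induction j)
  case 0 then show ?case by simp
next
  case (Suc j)
  show ?case
  proof (cases "k = Suc j")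
    case True then show ?thesis by simp
  next
    case False
    then have "bb M Y n k \<subseteq> bb M Y n j" using Suc by simp
    also have "\<dots> \<subseteq> bb M Y n (Suc j)" using binv[of n] Suc.prems by (simp add: binv_def)
    finally show ?thesis .
  qed
qed

lemma bb_cross:
  assumes "real k / 2^n \<le> real j / 2^m" "k \<le> 2^n" "j \<le> 2^m"
  shows "bb M Y n k \<subseteq> bb M Y m j"
proof -
  have "real k * 2^m \<le> real j * 2^n" using assms(1) by (simp add: field_simps)
  then have "real (k * 2^m) \<le> real (j * 2^n)" by simp
  then have kj: "k * 2^m \<le> j * 2^n" by (simp only: of_nat_le_iff)
  have "j * 2^n \<le> 2^m * 2^n" using assms(3) by simp
  then have j2: "j * 2^n \<le> 2^(n+m)" by (simp add: power_add mult.commute)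
  have "bb M Y n k = bb M Y (n + m) (k * 2^m)" by (simp add: bb_lift)
  also have "\<dots> \<subseteq> bb M Y (n + m) (j * 2^n)" using kj j2 by (intro bb_mono)
  also have "\<dots> = bb M Y m j" using bb_lift[of M Y m n j] by (simp add: add.commute)
  finally show ?thesis .
qed

lemma bb_sets: "k \<le> 2^n \<Longrightarrow> bb M Y n k \<in> sets M" using binv[of n] by (simp add: binv_def)
lemma bb_meas: "k \<le> 2^n \<Longrightarrow> measure M (bb M Y n k) = real k / 2^n" using binv[of n] by (simp add: binv_def)

definition VV where "VV w = {real k / 2^n | n k. k \<le> 2^n \<and> w \<in> bb M Y n k}"

lemma VV_ne: "w \<in> space M \<Longrightarrow> VV w \<noteq> {}"
proof -
  assume "w \<in> space M"
  then have "w \<in> bb M Y 0 1" by simp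
  then have "(1::real) \<in> VV w" unfolding VV_def mem_Collect_eq
    by (intro exI[of _ "0::nat"] exI[of _ "1::nat"]) simp
  then show ?thesis by blast
qed

lemma VV_bdd: "bdd_below (VV w)"
  by (rule bdd_belowI[of _ 0]) (auto simp: VV_def)

lemma UU_eq: "UU M Y w = Inf (VV w)" by (simp add: UU_def VV_def)

lemma UU_le: "k \<le> 2^n \<Longrightarrow> w \<in> bb M Y n k \<Longrightarrow> UU M Y w \<le> real k / 2^n"
  unfolding UU_eq by (rule cInf_lower[OF _ VV_bdd]) (auto simp: VV_def)

lemma UU_less: assumes "w \<in> space M" "UU M Y w < c"
  shows "\<exists>n k. k \<le> 2^n \<and> w \<in> bb M Y n k \<and> real k / 2^n < c"
proof -
  have "\<exists>x\<in>VV w. x < c" using cInf_less_iff[OF VV_ne[OF assms(1)] VV_bdd] assms(2) by (simp add: UU_eq)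
  then show ?thesis by (auto simp: VV_def)
qed

lemma UU_ge0: "w \<in> space M \<Longrightarrow> 0 \<le> UU M Y w"
  unfolding UU_eq by (rule cInf_greatest[OF VV_ne]) (auto simp: VV_def)

lemma UU_le1: "w \<in> space M \<Longrightarrow> UU M Y w \<le> 1"
  using UU_le[of 1 0 w] by simp

lemma UU_less_set: "{w\<in>space M. UU M Y w < c} = (\<Union>p\<in>{(n,k). k \<le> 2^n \<and> real k / 2^n < c}. bb M Y (fst p) (snd p))"
proof safe
  fix w assume "w \<in> space M" "UU M Y w < c"
  then obtain n k where "k \<le> 2^n" "w \<in> bb M Y n k" "real k / 2^n < c" using UU_less by blast
  then show "w \<in> (\<Union>p\<in>{(n,k). k \<le> 2^n \<and> real k / 2^n < c}. bb M Y (fst p) (snd p))" by force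
next
  fix w n k assume h: "k \<le> 2^n" "real k / 2^n < c" "w \<in> bb M Y (fst (n,k)) (snd (n,k))"
  then show "w \<in> space M" using bb_sets[of k n] sets.sets_into_space by auto
  show "UU M Y w < c" using UU_le[of k n w] h by simp
qed

lemma UU_meas: "UU M Y \<in> borel_measurable M"
  unfolding borel_measurable_iff_less
proof
  fix c
  show "{w\<in>space M. UU M Y w < c} \<in> sets M" unfolding UU_less_set
    by (rule sets.countable_UN'') (auto intro: bb_sets)
qed

lemma UU_key: assumes "w \<in> space M" "UU M Y w < distr_fun M Y y" shows "Y w \<le> y"
proof -
  obtain n k where nk: "k \<le> 2^n" "w \<in> bb M Y n k" "real k / 2^n < distr_fun M Y y"
    using UU_less[OF assms] by blast
  have "k \<noteq> 0"
  proof
    assume "k = 0" then show False using nk binv[of n] by (simp add: binv_def)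
  qed
  moreover have "k \<noteq> 2^n" using nk F_le1[OF YB, of y] by auto
  ultimately have "0 < k" "k < 2^n" using nk by auto
  then have "bb M Y n k \<subseteq> LL M Y (real k / 2^n)" using binv[of n] by (simp add: binv_def)
  then have "Y w \<le> qq M Y (real k / 2^n)" using nk by (auto simp: LL_def)
  also have "\<dots> \<le> y" using qq_le[OF YB, of "real k / 2^n" y] nk by simp
  finally show ?thesis .
qed

lemma UU_lt_prob: assumes "0 \<le> c" "c \<le> 1" shows "c \<le> measure M {w\<in>space M. UU M Y w < c}"
proof (cases "c = 0")
  case True then show ?thesis by simp
next
  case False
  then have c0: "0 < c" using assms by simp
  show ?thesis
  proof (rule le_by_pow)
    fix m :: nat
    obtain j where j: "j \<le> 2^m" "real j / 2^m < c" "c - 1/2^m \<le> real j / 2^m"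
      using dy_below[OF c0 assms(2)] by blast
    have "bb M Y m j \<subseteq> {w\<in>space M. UU M Y w < c}"
      using UU_le[of j m] j bb_sets[OF j(1)] sets.sets_into_space by fastforce
    then have "measure M (bb M Y m j) \<le> measure M {w\<in>space M. UU M Y w < c}"
      using UU_meas by (intro finite_measure_mono) auto
    then show "c - 1/2^m \<le> measure M {w\<in>space M. UU M Y w < c}" using bb_meas[OF j(1)] j by simp
  qed
qed

lemma UU_le_prob: assumes "0 \<le> c" "c < 1" shows "measure M {w\<in>space M. UU M Y w \<le> c} \<le> c"
proof -
  have "measure M {w\<in>space M. UU M Y w \<le> c} \<le> c + 1/2^m" for m :: nat
  proof -
    obtain j where j: "j \<le> 2^m" "c < real j / 2^m" "real j / 2^m \<le> c + 1/2^m"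
      using dy_above[OF assms] by blast
    have "{w\<in>space M. UU M Y w \<le> c} \<subseteq> bb M Y m j"
    proof safe
      fix w assume w: "w \<in> space M" "UU M Y w \<le> c"
      then obtain n k where nk: "k \<le> 2^n" "w \<in> bb M Y n k" "real k / 2^n < real j / 2^m"
        using UU_less[of w "real j / 2^m"] j by force
      then show "w \<in> bb M Y m j" using bb_cross[of k n j m] j by auto
    qed
    then have "measure M {w\<in>space M. UU M Y w \<le> c} \<le> measure M (bb M Y m j)"
      using bb_sets[OF j(1)] by (intro finite_measure_mono) auto
    then show ?thesis using bb_meas[OF j(1)] j by simp
  qed
  then have "- c - 1/2^m \<le> - measure M {w\<in>space M. UU M Y w \<le> c}" for m :: nat
    by (smt (verit))
  then have "- c \<le> - measure M {w\<in>space M. UU M Y w \<le> c}" by (rule le_by_pow)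
  then show ?thesis by simp
qed

end

lemma transfer:
  assumes al: "atomless M" and XB: "X \<in> Bb M" and YB: "Y \<in> Bb M"
    and eq: "distr_fun M X = distr_fun M Y"
    and X0B: "X0 \<in> Bb M" and ge: "\<forall>w\<in>space M. X0 w \<ge> X w"
  shows "\<exists>Y0. Y0 \<in> Bb M \<and> (\<forall>w\<in>space M. Y0 w \<ge> Y w) \<and> distr_fun M Y0 = distr_fun M X0"
proof -
  define G where "G = distr_fun M X0"
  have Xm: "X \<in> borel_measurable M" using XB by (simp add: Bb_def)
  have X0m: "X0 \<in> borel_measurable M" using X0B by (simp add: Bb_def)
  have Ym: "Y \<in> borel_measurable M" using YB by (simp add: Bb_def)
  have GF: "G z \<le> distr_fun M Y z" for z
  proof -
    have "G z \<le> distr_fun M X z" unfolding G_def distr_fun_def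
      using ge Xm by (intro finite_measure_mono) force+
    then show ?thesis using eq by simp
  qed
  obtain c where c: "\<And>w. w \<in> space M \<Longrightarrow> \<bar>X0 w\<bar> \<le> c" using Ybnd[OF X0B] by blast
  obtain cY where cY: "\<And>w. w \<in> space M \<Longrightarrow> \<bar>Y w\<bar> \<le> cY" using Ybnd[OF YB] by blast
  have Gc: "G c = 1" using F_top[OF X0B c] by (simp add: G_def)
  have Gbot: "y < - c \<Longrightarrow> G y = 0" for y using F_bot[OF X0B c] by (simp add: G_def)
  have Gmono: "y \<le> y' \<Longrightarrow> G y \<le> G y'" for y y' using df_mono[OF X0m] by (simp add: G_def)
  have G01: "0 \<le> G z" "G z \<le> 1" for z by (auto simp: G_def distr_fun_def)
  define T where "T u = {y. G y > max 0 u} \<union> {c}" for u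
  define Qg where "Qg u = Inf (T u)" for u
  have Tne: "T u \<noteq> {}" for u by (simp add: T_def)
  have c0: "0 \<le> c"
  proof -
    obtain w where "w \<in> space M" using not_empty by blast
    then show ?thesis using c[of w] by linarith
  qed
  have Tlow: "- c \<le> y" if y: "y \<in> T u" for y u
  proof (rule ccontr)
    assume h: "\<not> - c \<le> y"
    then have "G y = 0" using Gbot by simp
    then show False using y h c0 by (auto simp: T_def)
  qed
  have Tbdd: "bdd_below (T u)" for u
    using Tlow by (intro bdd_belowI[of _ "- c"]) blast
  have Qmono: "mono Qg"
  proof (rule monoI)
    fix u v :: real assume "u \<le> v"
    then have "T v \<subseteq> T u" by (auto simp: T_def)
    then show "Qg u \<le> Qg v" unfolding Qg_def by (intro cInf_superset_mono Tne Tbdd)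
  qed
  have Qbnd: "- c \<le> Qg u \<and> Qg u \<le> c" for u
  proof
    show "Qg u \<le> c" unfolding Qg_def by (rule cInf_lower[OF _ Tbdd]) (simp add: T_def)
    show "- c \<le> Qg u" unfolding Qg_def using Tlow by (intro cInf_greatest[OF Tne]) blast
  qed
  have T_G: "y \<in> T u \<Longrightarrow> 0 \<le> u \<Longrightarrow> u < 1 \<Longrightarrow> G y > u" for y u using Gc by (auto simp: T_def)
  define U where "U = UU M Y"
  have Um: "U \<in> borel_measurable M" unfolding U_def by (rule UU_meas[OF YB al])
  have U01: "w \<in> space M \<Longrightarrow> 0 \<le> U w \<and> U w \<le> 1" for w using UU_ge0[OF YB al] UU_le1[OF YB al] by (simp add: U_def)
  define Y0 where "Y0 w = max (Y w) (Qg (U w))" for w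
  have Y0m: "Y0 \<in> borel_measurable M"
  proof -
    have "(\<lambda>w. Qg (U w)) \<in> borel_measurable M"
      using measurable_compose[OF Um borel_measurable_mono[OF Qmono]] by (simp add: comp_def)
    then show ?thesis unfolding Y0_def using Ym by measurable
  qed
  have Y0B: "Y0 \<in> Bb M"
  proof -
    have "\<bar>Y0 w\<bar> \<le> max cY c" if "w \<in> space M" for w
      using cY[OF that] Qbnd[of "U w"] by (auto simp: Y0_def)
    then have "bounded (Y0 ` space M)" unfolding bounded_iff by auto
    then show ?thesis using Y0m by (simp add: Bb_def)
  qed
  have YQ: "Y w \<le> Qg (U w)" if w: "w \<in> space M" "U w < 1" for w
    unfolding Qg_def
  proof (rule cInf_greatest[OF Tne])
    fix y assume "y \<in> T (U w)"
    then have "U w < G y" using T_G U01 w by blast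
    then have "UU M Y w < distr_fun M Y y" using GF[of y] by (simp add: U_def)
    then show "Y w \<le> y" using UU_key[OF YB al w(1)] by blast
  qed
  have Q1: "Qg u \<le> z" if "0 \<le> u" "u < G z" for u z
    unfolding Qg_def using that by (intro cInf_lower[OF _ Tbdd]) (simp add: T_def)
  have Q2: "u \<le> G z" if u: "0 \<le> u" "u < 1" "Qg u \<le> z" for u z
  proof -
    have "u \<le> distr_fun M X0 z"
    proof (rule df_right[OF X0m])
      fix n
      have "0 < 1 / real (Suc n)" by simp
      then have "Qg u < z + 1 / real (Suc n)" using u(3) by linarith
      then have "Inf (T u) < z + 1 / real (Suc n)" by (simp only: Qg_def)
      then obtain y where y: "y \<in> T u" "y < z + 1 / real (Suc n)"
        using cInf_less_iff[OF Tne Tbdd] by blast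
      then have "u < G y" using T_G u by blast
      also have "G y \<le> G (z + 1 / real (Suc n))" using y Gmono by simp
      finally show "u \<le> distr_fun M X0 (z + 1 / real (Suc n))" by (simp add: G_def)
    qed
    then show ?thesis by (simp add: G_def)
  qed
  define N where "N = {w\<in>space M. 1 \<le> U w}"
  have Ns: "N \<in> sets M" unfolding N_def using Um by measurable
  have NU: "N = space M - {w\<in>space M. U w < 1}" by (auto simp: N_def)
  have "1 \<le> measure M {w\<in>space M. U w < 1}" using UU_lt_prob[OF YB al, of 1] by (simp add: U_def)
  then have P1: "measure M {w\<in>space M. U w < 1} = 1" using prob_le_1 by (meson antisym)
  have "{w\<in>space M. U w < 1} \<in> sets M" using Um by measurable
  then have PN: "measure M N = 0" unfolding NU using P1
    by (subst finite_measure_Diff) (auto simp: prob_space)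
  have df: "distr_fun M Y0 z = G z" for z
  proof -
    define E where "E = {w\<in>space M. Y0 w \<le> z}"
    have Es: "E \<in> sets M" unfolding E_def using Y0m by measurable
    define A where "A = {w\<in>space M. U w < G z}"
    have As: "A \<in> sets M" unfolding A_def using Um by measurable
    have "A - N \<subseteq> E"
    proof
      fix w assume w: "w \<in> A - N"
      then have w': "w \<in> space M" "U w < 1" "U w < G z" by (auto simp: A_def N_def)
      have "Qg (U w) \<le> z" using Q1[of "U w" z] w' U01 by blast
      then show "w \<in> E" using YQ[OF w'(1,2)] w' by (simp add: E_def Y0_def)
    qed
    then have "measure M (A - N) \<le> measure M E" using Es by (intro finite_measure_mono)
    moreover have "measure M (A - N) = measure M A" using As Ns PN
      by (simp add: finite_measure_Diff' measure_Diff_null_set null_setsI emeasure_eq_measure)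
    moreover have "G z \<le> measure M A" using UU_lt_prob[OF YB al, of "G z"] G01 by (simp add: A_def U_def)
    ultimately have lo: "G z \<le> measure M E" by simp
    have hi: "measure M E \<le> G z"
    proof (cases "G z < 1")
      case False
      then show ?thesis using G01[of z] by simp
    next
      case True
      define B where "B = {w\<in>space M. U w \<le> G z}"
      have Bs: "B \<in> sets M" unfolding B_def using Um by measurable
      have "E \<subseteq> B \<union> N"
      proof
        fix w assume w: "w \<in> E"
        show "w \<in> B \<union> N"
        proof (cases "U w < 1")
          case True
          then have "Qg (U w) \<le> z" using w by (simp add: E_def Y0_def)
          then have "U w \<le> G z" using Q2[of "U w" z] U01 True w by (simp add: E_def)
          then show ?thesis using w by (simp add: B_def E_def)
        next
          case False then show ?thesis using w by (simp add: N_def E_def)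
        qed
      qed
      then have "measure M E \<le> measure M (B \<union> N)" using Bs Ns by (intro finite_measure_mono) auto
      also have "\<dots> = measure M B" using Bs Ns PN
        by (simp add: measure_Un_null_set null_setsI emeasure_eq_measure)
      also have "\<dots> \<le> G z" using UU_le_prob[OF YB al, of "G z"] G01 True by (simp add: B_def U_def)
      finally show ?thesis .
    qed
    show ?thesis using lo hi by (simp add: distr_fun_def E_def)
  qed
  have "distr_fun M Y0 = distr_fun M X0" using df unfolding G_def by (intro ext) 
  moreover have "\<forall>w\<in>space M. Y0 w \<ge> Y w" unfolding Y0_def by simp
  ultimately show ?thesis using Y0B by blast
qed

lemma set_sub:
  assumes al: "atomless M" and li: "law_invariant M H" and XB: "X \<in> Bb M" and YB: "Y \<in> Bb M"
    and eq: "distr_fun M X = distr_fun M Y"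
  shows "{H X0 | X0. X0 \<in> Bb M \<and> (\<forall>\<omega>\<in>space M. X0 \<omega> \<ge> X \<omega>)} \<subseteq> {H X0 | X0. X0 \<in> Bb M \<and> (\<forall>\<omega>\<in>space M. X0 \<omega> \<ge> Y \<omega>)}"
proof
  fix v assume "v \<in> {H X0 | X0. X0 \<in> Bb M \<and> (\<forall>\<omega>\<in>space M. X0 \<omega> \<ge> X \<omega>)}"
  then obtain X0 where X0: "v = H X0" "X0 \<in> Bb M" "\<forall>\<omega>\<in>space M. X0 \<omega> \<ge> X \<omega>" by blast
  obtain Y0 where Y0: "Y0 \<in> Bb M" "\<forall>w\<in>space M. Y0 w \<ge> Y w" "distr_fun M Y0 = distr_fun M X0"
    using transfer[OF al XB YB eq X0(2,3)] by blast
  have "H Y0 = H X0" using li Y0 X0 unfolding law_invariant_def by blast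
  then show "v \<in> {H X0 | X0. X0 \<in> Bb M \<and> (\<forall>\<omega>\<in>space M. X0 \<omega> \<ge> Y \<omega>)}"
    using X0 Y0 \<open>H Y0 = H X0\<close> by (intro CollectI exI[of _ Y0]) auto
qed

end


theorem proposition4p3:
  fixes M :: "'a measure" and H :: "('a \<Rightarrow> real) \<Rightarrow> real"
  assumes "prob_space M"
    and "atomless M"
    and "premium_principle M H"
    and "law_invariant M H"
  shows "law_invariant M (R_Max M H)"
proof -
  interpret prob_space M by fact
  show ?thesis unfolding law_invariant_def
  proof (intro ballI impI)
    fix X Y assume X: "X \<in> Bb M" and Y: "Y \<in> Bb M" and eq: "distr_fun M X = distr_fun M Y"
    have "{H X0 | X0. X0 \<in> Bb M \<and> (\<forall>\<omega>\<in>space M. X0 \<omega> \<ge> X \<omega>)} = {H X0 | X0. X0 \<in> Bb M \<and> (\<forall>\<omega>\<in>space M. X0 \<omega> \<ge> Y \<omega>)}"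
      using set_sub[OF assms(2,4) X Y eq] set_sub[OF assms(2,4) Y X eq[symmetric]] by (rule subset_antisym)
    then show "R_Max M H X = R_Max M H Y" unfolding R_Max_def by simp
  qed
qed

end
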